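(* Let $\mathfrak{U}$ be a Banach algebra such that $\mathfrak{U}^\sharp$ is symmetrically pseudo-amenable. Then every bounded Jordan derivation from $\mathfrak{U}$ into a symmetric Banach $\mathfrak{U}$-bimodule $X$ is a derivation.
   Context: A Banach $\mathfrak{U}$-bimodule $X$ is symmetric if $ax=xa$ for all $a\in\mathfrak{U}$, $x\in X$. $\mathfrak{U}^\sharp=\mathfrak{U}\oplus\mathbb{C}1$ is the unitization of $\mathfrak{U}$ with the $\ell^1$-norm (a unit is adjoined even if $\mathfrak{U}$ is unital). A linear map $\delta:\mathfrak{U}\to X$ is a derivation if $\delta(ab)=\delta(a)b+a\delta(b)$, and a Jordan derivation if $\delta(ab+ba)=\delta(a)b+a\delta(b)+\delta(b)a+b\delta(a)$, for all $a,b$. For a Banach algebra $\mathfrak{A}$, $\mathfrak{A}\widehat{\otimes}\mathfrak{A}$ is the projective tensor product with $a(b\otimes c)=ab\otimes c$, $(b\otimes c)a=b\otimes ca$, $\pi(b\otimes c)=bc$ (extended linearly and continuously); the flip is $(b\otimes c)^\circ=c\otimes b$ and $\mathbf{t}$ is symmetric if $\mathbf{t}^\circ=\mathbf{t}$. A symmetric approximate diagonal is a net $\{\mathbf{t}_\lambda\}$ (not necessarily bounded) of symmetric elements with $a\mathbf{t}_\lambda-\mathbf{t}_\lambda a\to0$ and $\pi(\mathbf{t}_\lambda)a\to a$ for all $a\in\mathfrak{A}$; $\mathfrak{A}$ is symmetrically pseudo-amenable if it has one. *)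

theory Defs
  imports Complex_Main
begin

definition cvs :: "(complex \<Rightarrow> 'v::real_normed_vector \<Rightarrow> 'v) \<Rightarrow> bool" where
  "cvs sc \<longleftrightarrow>
     (\<forall>r x. sc (complex_of_real r) x = scaleR r x) \<and>
     (\<forall>c x y. sc c (x + y) = sc c x + sc c y) \<and>
     (\<forall>c d x. sc (c + d) x = sc c x + sc d x) \<and>
     (\<forall>c d x. sc (c * d) x = sc c (sc d x)) \<and>
     (\<forall>c x. norm (sc c x) = cmod c * norm x)"

definition cbanach_algebra :: "(complex \<Rightarrow> 'a::{real_normed_algebra,banach} \<Rightarrow> 'a) \<Rightarrow> bool" where
  "cbanach_algebra sc \<longleftrightarrow> cvs sc \<and>
     (\<forall>c x y. sc c (x * y) = sc c x * y \<and> sc c (x * y) = x * sc c y)"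

(* Unitization U# = U \<oplus> C1, represented by pairs, with l1 norm *)
definition uadd :: "'a::{real_normed_algebra} \<times> complex \<Rightarrow> 'a \<times> complex \<Rightarrow> 'a \<times> complex" where
  "uadd u v = (fst u + fst v, snd u + snd v)"

definition usub :: "'a::{real_normed_algebra} \<times> complex \<Rightarrow> 'a \<times> complex \<Rightarrow> 'a \<times> complex" where
  "usub u v = (fst u - fst v, snd u - snd v)"

definition uscale :: "(complex \<Rightarrow> 'a \<Rightarrow> 'a) \<Rightarrow> complex \<Rightarrow> 'a::{real_normed_algebra} \<times> complex \<Rightarrow> 'a \<times> complex" where
  "uscale sc c u = (sc c (fst u), c * snd u)"

definition umult :: "(complex \<Rightarrow> 'a \<Rightarrow> 'a) \<Rightarrow> 'a::{real_normed_algebra} \<times> complex \<Rightarrow> 'a \<times> complex \<Rightarrow> 'a \<times> complex" where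
  "umult sc u v = (fst u * fst v + sc (snd u) (fst v) + sc (snd v) (fst u), snd u * snd v)"

definition unorm :: "'a::{real_normed_algebra} \<times> complex \<Rightarrow> real" where
  "unorm u = norm (fst u) + cmod (snd u)"

(* complex bilinear forms on U# x U# of norm at most 1; by Hahn-Banach these norm the
   projective tensor product U# \<otimes>^ U# (its dual is the space of bounded bilinear forms) *)
definition cbilinear :: "(complex \<Rightarrow> 'a \<Rightarrow> 'a) \<Rightarrow> ('a::{real_normed_algebra} \<times> complex \<Rightarrow> 'a \<times> complex \<Rightarrow> complex) \<Rightarrow> bool" where
  "cbilinear sc \<phi> \<longleftrightarrow>
     (\<forall>u v w. \<phi> (uadd u v) w = \<phi> u w + \<phi> v w) \<and>
     (\<forall>u v w. \<phi> u (uadd v w) = \<phi> u v + \<phi> u w) \<and>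
     (\<forall>c u v. \<phi> (uscale sc c u) v = c * \<phi> u v) \<and>
     (\<forall>c u v. \<phi> u (uscale sc c v) = c * \<phi> u v)"

definition pball :: "(complex \<Rightarrow> 'a \<Rightarrow> 'a) \<Rightarrow> ('a::{real_normed_algebra} \<times> complex \<Rightarrow> 'a \<times> complex \<Rightarrow> complex) set" where
  "pball sc = {\<phi>. cbilinear sc \<phi> \<and> (\<forall>u v. cmod (\<phi> u v) \<le> unorm u * unorm v)}"

(* An element of the projective tensor product U# \<otimes>^ U# is represented by a sequence
   (u_n, v_n) with sum ||u_n|| ||v_n|| < \<infinity>, standing for sum u_n \<otimes> v_n. *)
type_synonym 'a tens = "nat \<Rightarrow> ('a \<times> complex) \<times> ('a \<times> complex)"

definition ptensor :: "'a::{real_normed_algebra} tens \<Rightarrow> bool" where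
  "ptensor r \<longleftrightarrow> summable (\<lambda>n. unorm (fst (r n)) * unorm (snd (r n)))"

definition pair :: "('a::{real_normed_algebra} \<times> complex \<Rightarrow> 'a \<times> complex \<Rightarrow> complex) \<Rightarrow> 'a tens \<Rightarrow> complex" where
  "pair \<phi> r = (\<Sum>n. \<phi> (fst (r n)) (snd (r n)))"

definition pdist :: "(complex \<Rightarrow> 'a \<Rightarrow> 'a) \<Rightarrow> 'a::{real_normed_algebra} tens \<Rightarrow> 'a tens \<Rightarrow> real" where
  "pdist sc r s = (SUP \<phi>\<in>pball sc. cmod (pair \<phi> r - pair \<phi> s))"

definition flip :: "'a tens \<Rightarrow> 'a tens" where
  "flip r = (\<lambda>n. (snd (r n), fst (r n)))"

definition lact :: "(complex \<Rightarrow> 'a \<Rightarrow> 'a) \<Rightarrow> 'a::{real_normed_algebra} \<times> complex \<Rightarrow> 'a tens \<Rightarrow> 'a tens" where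
  "lact sc u r = (\<lambda>n. (umult sc u (fst (r n)), snd (r n)))"

definition ract :: "(complex \<Rightarrow> 'a \<Rightarrow> 'a) \<Rightarrow> 'a::{real_normed_algebra} tens \<Rightarrow> 'a \<times> complex \<Rightarrow> 'a tens" where
  "ract sc r u = (\<lambda>n. (fst (r n), umult sc (snd (r n)) u))"

definition ppi :: "(complex \<Rightarrow> 'a \<Rightarrow> 'a) \<Rightarrow> 'a::{real_normed_algebra} tens \<Rightarrow> 'a \<times> complex" where
  "ppi sc r = ((\<Sum>n. fst (umult sc (fst (r n)) (snd (r n)))),
               (\<Sum>n. snd (umult sc (fst (r n)) (snd (r n)))))"

(* symmetric approximate diagonal for U#, as a net given by a proper filter F and a map t *)
definition sym_approx_diag :: "(complex \<Rightarrow> 'a \<Rightarrow> 'a) \<Rightarrow> 'i filter \<Rightarrow> ('i \<Rightarrow> 'a::{real_normed_algebra} tens) \<Rightarrow> bool" where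
  "sym_approx_diag sc F t \<longleftrightarrow>
     F \<noteq> bot \<and>
     (\<forall>\<^sub>F i in F. ptensor (t i) \<and> pdist sc (flip (t i)) (t i) = 0) \<and>
     (\<forall>u. ((\<lambda>i. pdist sc (lact sc u (t i)) (ract sc (t i) u)) \<longlongrightarrow> 0) F) \<and>
     (\<forall>u. ((\<lambda>i. unorm (usub (umult sc (ppi sc (t i)) u) u)) \<longlongrightarrow> 0) F)"

definition sym_pseudo_amenable_unitization :: "(complex \<Rightarrow> 'a::{real_normed_algebra} \<Rightarrow> 'a) \<Rightarrow> bool" where
  "sym_pseudo_amenable_unitization sc \<longleftrightarrow>
     (\<exists>(F :: 'a tens filter) t. sym_approx_diag sc F t)"

definition banach_bimodule ::
  "(complex \<Rightarrow> 'a \<Rightarrow> 'a) \<Rightarrow> (complex \<Rightarrow> 'x \<Rightarrow> 'x) \<Rightarrow> ('a::{real_normed_algebra} \<Rightarrow> 'x::banach \<Rightarrow> 'x) \<Rightarrow> ('x \<Rightarrow> 'a \<Rightarrow> 'x) \<Rightarrow> bool" where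
  "banach_bimodule sc scX lm rm \<longleftrightarrow> cvs scX \<and>
     (\<forall>a b x. lm (a + b) x = lm a x + lm b x) \<and>
     (\<forall>a x y. lm a (x + y) = lm a x + lm a y) \<and>
     (\<forall>c a x. lm (sc c a) x = scX c (lm a x)) \<and>
     (\<forall>c a x. lm a (scX c x) = scX c (lm a x)) \<and>
     (\<forall>a b x. rm x (a + b) = rm x a + rm x b) \<and>
     (\<forall>a x y. rm (x + y) a = rm x a + rm y a) \<and>
     (\<forall>c a x. rm x (sc c a) = scX c (rm x a)) \<and>
     (\<forall>c a x. rm (scX c x) a = scX c (rm x a)) \<and>
     (\<forall>a b x. lm (a * b) x = lm a (lm b x)) \<and>
     (\<forall>a b x. rm x (a * b) = rm (rm x a) b) \<and>
     (\<forall>a b x. rm (lm a x) b = lm a (rm x b)) \<and>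
     (\<forall>a x. norm (lm a x) \<le> norm a * norm x) \<and>
     (\<forall>a x. norm (rm x a) \<le> norm x * norm a)"

definition symmetric_bimodule :: "('a \<Rightarrow> 'x \<Rightarrow> 'x) \<Rightarrow> ('x \<Rightarrow> 'a \<Rightarrow> 'x) \<Rightarrow> bool" where
  "symmetric_bimodule lm rm \<longleftrightarrow> (\<forall>a x. lm a x = rm x a)"

definition clinear_map :: "(complex \<Rightarrow> 'a \<Rightarrow> 'a) \<Rightarrow> (complex \<Rightarrow> 'x \<Rightarrow> 'x) \<Rightarrow> ('a::real_normed_vector \<Rightarrow> 'x::real_normed_vector) \<Rightarrow> bool" where
  "clinear_map sc scX d \<longleftrightarrow> (\<forall>a b. d (a + b) = d a + d b) \<and> (\<forall>c a. d (sc c a) = scX c (d a))"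

definition bounded_map :: "('a::real_normed_vector \<Rightarrow> 'x::real_normed_vector) \<Rightarrow> bool" where
  "bounded_map d \<longleftrightarrow> (\<exists>K. \<forall>a. norm (d a) \<le> K * norm a)"

definition jordan_derivation :: "('a \<Rightarrow> 'x \<Rightarrow> 'x) \<Rightarrow> ('x \<Rightarrow> 'a \<Rightarrow> 'x) \<Rightarrow> ('a::real_normed_algebra \<Rightarrow> 'x::real_normed_vector) \<Rightarrow> bool" where
  "jordan_derivation lm rm d \<longleftrightarrow>
     (\<forall>a b. d (a * b + b * a) = rm (d a) b + lm a (d b) + rm (d b) a + lm b (d a))"

definition derivation :: "('a \<Rightarrow> 'x \<Rightarrow> 'x) \<Rightarrow> ('x \<Rightarrow> 'a \<Rightarrow> 'x) \<Rightarrow> ('a::real_normed_algebra \<Rightarrow> 'x::real_normed_vector) \<Rightarrow> bool" where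
  "derivation lm rm d \<longleftrightarrow> (\<forall>a b. d (a * b) = rm (d a) b + lm a (d b))"

end

theory Submission
  imports Defs
begin

definition hbset :: "'v::real_normed_vector \<Rightarrow> ('v \<times> real) set set" where
  "hbset y = {G. (y, norm y) \<in> G \<and> (\<forall>x r s. (x,r)\<in>G \<longrightarrow> (x,s)\<in>G \<longrightarrow> r = s) \<and>
     (\<forall>x r x' r'. (x,r)\<in>G \<longrightarrow> (x',r')\<in>G \<longrightarrow> (x+x', r+r')\<in>G) \<and>
     (\<forall>x r a. (x,r)\<in>G \<longrightarrow> (a *\<^sub>R x, a*r)\<in>G) \<and> (\<forall>x r. (x,r)\<in>G \<longrightarrow> r \<le> norm x)}"

lemma hb_chain_union:
  assumes C: "C \<subseteq> hbset y" "C \<noteq> {}" and ch: "\<forall>X\<in>C. \<forall>Y\<in>C. X \<subseteq> Y \<or> Y \<subseteq> X"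
  shows "\<Union>C \<in> hbset y"
proof -
  have two: "\<exists>G\<in>C. p \<in> G \<and> q \<in> G" if pq: "p \<in> \<Union>C" "q \<in> \<Union>C" for p q
  proof -
    obtain X Y where "X\<in>C" "Y\<in>C" "p\<in>X" "q\<in>Y" using pq by blast
    then show ?thesis using ch by blast
  qed
  obtain G0 where "G0 \<in> C" using C by auto
  show ?thesis unfolding hbset_def
  proof (rule CollectI, intro conjI allI impI)
    show "(y, norm y) \<in> \<Union>C" using \<open>G0\<in>C\<close> C by (auto simp: hbset_def)
  next
    fix x r s assume "(x,r) \<in> \<Union>C" "(x,s)\<in>\<Union>C"
    then obtain G where "G\<in>C" "(x,r)\<in>G" "(x,s)\<in>G" using two by blast
    then have "G \<in> hbset y" using C by blast
    then show "r = s" using \<open>(x,r)\<in>G\<close> \<open>(x,s)\<in>G\<close> unfolding hbset_def by blast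
  next
    fix x r x' r' assume "(x,r) \<in> \<Union>C" "(x',r')\<in>\<Union>C"
    then obtain G where "G\<in>C" "(x,r)\<in>G" "(x',r')\<in>G" using two by blast
    then have "G \<in> hbset y" using C by blast
    then have "(x+x', r+r') \<in> G" using \<open>(x,r)\<in>G\<close> \<open>(x',r')\<in>G\<close> unfolding hbset_def by blast
    then show "(x+x', r+r') \<in> \<Union>C" using \<open>G\<in>C\<close> by blast
  next
    fix x r a assume "(x,r) \<in> \<Union>C"
    then obtain G where "G\<in>C" "(x,r)\<in>G" by blast
    then have "G \<in> hbset y" using C by blast
    then have "(a *\<^sub>R x, a*r) \<in> G" using \<open>(x,r)\<in>G\<close> unfolding hbset_def by blast
    then show "(a *\<^sub>R x, a*r) \<in> \<Union>C" using \<open>G\<in>C\<close> by blast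
  next
    fix x r assume "(x,r) \<in> \<Union>C"
    then obtain G where "G\<in>C" "(x,r)\<in>G" by blast
    then have "G \<in> hbset y" using C by blast
    then show "r \<le> norm x" using \<open>(x,r)\<in>G\<close> unfolding hbset_def by blast
  qed
qed

lemma hb_base:
  assumes "y \<noteq> 0"
  shows "{(a *\<^sub>R y, a * norm y) | a. True} \<in> hbset y"
  unfolding hbset_def
proof (rule CollectI, intro conjI allI impI)
  show "(y, norm y) \<in> {(a *\<^sub>R y, a * norm y) | a. True}" by (rule CollectI, rule exI[of _ 1]) simp
next
  fix x r s assume "(x,r) \<in> {(a *\<^sub>R y, a * norm y) | a. True}" "(x,s) \<in> {(a *\<^sub>R y, a * norm y) | a. True}"
  then obtain a b where "x = a *\<^sub>R y" "r = a * norm y" "x = b *\<^sub>R y" "s = b * norm y" by blast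
  then have "a = b" using assms by (metis scaleR_cancel_right)
  then show "r = s" using \<open>r = _\<close> \<open>s = _\<close> by simp
next
  fix x r x' r' assume "(x,r) \<in> {(a *\<^sub>R y, a * norm y) | a. True}" "(x',r') \<in> {(a *\<^sub>R y, a * norm y) | a. True}"
  then obtain a b where "x = a *\<^sub>R y" "r = a * norm y" "x' = b *\<^sub>R y" "r' = b * norm y" by blast
  then show "(x+x', r+r') \<in> {(a *\<^sub>R y, a * norm y) | a. True}"
    by (intro CollectI exI[of _ "a+b"]) (simp add: scaleR_add_left distrib_right)
next
  fix x r c assume "(x,r) \<in> {(a *\<^sub>R y, a * norm y) | a. True}"
  then obtain a where "x = a *\<^sub>R y" "r = a * norm y" by blast
  then show "(c *\<^sub>R x, c*r) \<in> {(a *\<^sub>R y, a * norm y) | a. True}"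
    by (intro CollectI exI[of _ "c*a"]) simp
next
  fix x r assume "(x,r) \<in> {(a *\<^sub>R y, a * norm y) | a. True}"
  then obtain a where "x = a *\<^sub>R y" "r = a * norm y" by blast
  then show "r \<le> norm x" by (simp add: mult_right_mono)
qed

lemma hb_extend:
  assumes M: "M \<in> hbset y" and z: "\<forall>r. (z,r) \<notin> M"
  shows "\<exists>M'\<in>hbset y. M \<subseteq> M' \<and> M' \<noteq> M"
proof -
  have fnc: "\<And>x r s. (x,r)\<in>M \<Longrightarrow> (x,s)\<in>M \<Longrightarrow> r = s"
    and add: "\<And>x r x' r'. (x,r)\<in>M \<Longrightarrow> (x',r')\<in>M \<Longrightarrow> (x+x', r+r')\<in>M"
    and scl: "\<And>x r a. (x,r)\<in>M \<Longrightarrow> (a *\<^sub>R x, a*r)\<in>M"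
    and bnd: "\<And>x r. (x,r)\<in>M \<Longrightarrow> r \<le> norm x"
    and yM: "(y, norm y) \<in> M" using M unfolding hbset_def by blast+
  have zero: "(0,0) \<in> M" using scl[OF yM, of 0] by simp
  define S where "S = {r - norm (x - z) | x r. (x,r) \<in> M}"
  define \<alpha> where "\<alpha> = Sup S"
  have key: "r - norm (x - z) \<le> norm (x' + z) - r'" if "(x,r)\<in>M" "(x',r')\<in>M" for x r x' r'
  proof -
    have "r + r' \<le> norm (x + x')" using bnd[OF add[OF that]] .
    also have "x + x' = (x - z) + (x' + z)" by simp
    also have "norm \<dots> \<le> norm (x - z) + norm (x' + z)" by (rule norm_triangle_ineq)
    finally show ?thesis by simp
  qed
  have Sne: "S \<noteq> {}" using zero unfolding S_def by blast
  have Sbdd: "bdd_above S" unfolding S_def bdd_above_def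
    using key[OF _ zero] by auto
  have up: "r - norm (x - z) \<le> \<alpha>" if "(x,r)\<in>M" for x r
    unfolding \<alpha>_def by (rule cSup_upper[OF _ Sbdd]) (use that S_def in blast)
  have lo: "\<alpha> \<le> norm (x' + z) - r'" if "(x',r')\<in>M" for x' r'
    unfolding \<alpha>_def by (rule cSup_least[OF Sne]) (use key[OF _ that] S_def in blast)
  define M' where "M' = {(x + t *\<^sub>R z, r + t * \<alpha>) | x r t. (x,r) \<in> M}"
  have sub: "M \<subseteq> M'"
  proof
    fix p assume "p \<in> M" then show "p \<in> M'" unfolding M'_def
      by (intro CollectI exI[of _ "fst p"] exI[of _ "snd p"] exI[of _ 0]) simp
  qed
  have zM': "(z, \<alpha>) \<in> M'" unfolding M'_def
    by (intro CollectI exI[of _ 0] exI[of _ 0] exI[of _ 1]) (simp add: zero)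
  have neq: "M' \<noteq> M" using zM' z by blast
  have inM': "M' \<in> hbset y" unfolding hbset_def
  proof (rule CollectI, intro conjI allI impI)
    show "(y, norm y) \<in> M'" using sub yM by blast
  next
    fix x r s assume a1: "(x,r) \<in> M'" "(x,s) \<in> M'"
    then obtain x1 r1 t1 x2 r2 t2 where e: "x = x1 + t1 *\<^sub>R z" "r = r1 + t1 * \<alpha>" "(x1,r1)\<in>M"
      "x = x2 + t2 *\<^sub>R z" "s = r2 + t2 * \<alpha>" "(x2,r2)\<in>M" unfolding M'_def by blast
    show "r = s"
    proof (cases "t1 = t2")
      case True
      then have "x1 = x2" using e by simp
      then show ?thesis using e True fnc by simp
    next
      case False
      have "(x1 + (-1) *\<^sub>R x2, r1 + (-1) * r2) \<in> M" using add[OF e(3) scl[OF e(6)]] .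
      from scl[OF this, of "inverse (t2 - t1)"]
      have "(inverse (t2 - t1) *\<^sub>R (x1 - x2), inverse (t2 - t1) * (r1 - r2)) \<in> M" by simp
      moreover have "x1 - x2 = (t2 - t1) *\<^sub>R z" using e by (simp add: algebra_simps)
      ultimately have "(z, inverse (t2 - t1) * (r1 - r2)) \<in> M" using False by simp
      then show ?thesis using z by blast
    qed
  next
    fix x r x' r' assume "(x,r) \<in> M'" "(x',r') \<in> M'"
    then obtain x1 r1 t1 x2 r2 t2 where e: "x = x1 + t1 *\<^sub>R z" "r = r1 + t1 * \<alpha>" "(x1,r1)\<in>M"
      "x' = x2 + t2 *\<^sub>R z" "r' = r2 + t2 * \<alpha>" "(x2,r2)\<in>M" unfolding M'_def by blast
    show "(x + x', r + r') \<in> M'" unfolding M'_def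
      by (intro CollectI exI[of _ "x1+x2"] exI[of _ "r1+r2"] exI[of _ "t1+t2"])
         (simp add: e add[OF e(3) e(6)] algebra_simps)
  next
    fix x r a assume "(x,r) \<in> M'"
    then obtain x1 r1 t1 where e: "x = x1 + t1 *\<^sub>R z" "r = r1 + t1 * \<alpha>" "(x1,r1)\<in>M"
      unfolding M'_def by blast
    show "(a *\<^sub>R x, a * r) \<in> M'" unfolding M'_def
      by (intro CollectI exI[of _ "a *\<^sub>R x1"] exI[of _ "a*r1"] exI[of _ "a*t1"])
         (simp add: e scl[OF e(3)] algebra_simps)
  next
    fix x r assume "(x,r) \<in> M'"
    then obtain x1 r1 t where e: "x = x1 + t *\<^sub>R z" "r = r1 + t * \<alpha>" "(x1,r1)\<in>M"
      unfolding M'_def by blast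
    consider "t = 0" | "t > 0" | "t < 0" by linarith
    then show "r \<le> norm x"
    proof cases
      case 1 then show ?thesis using e bnd by simp
    next
      case 2
      have eq: "t *\<^sub>R (inverse t *\<^sub>R x1 + z) = x" using 2 e by (simp add: algebra_simps)
      have nx: "norm x = t * norm (inverse t *\<^sub>R x1 + z)"
        using 2 eq by (metis norm_scaleR abs_of_pos)
      have "\<alpha> \<le> norm (inverse t *\<^sub>R x1 + z) - inverse t * r1" using lo[OF scl[OF e(3)]] .
      then have "t * \<alpha> \<le> t * (norm (inverse t *\<^sub>R x1 + z) - inverse t * r1)"
        using 2 by (simp add: mult_left_mono)
      also have "\<dots> = norm x - r1" using 2 by (simp add: nx right_diff_distrib)
      finally show ?thesis using e by simp
    next
      case 3
      define s where "s = - t"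
      have s: "s > 0" using 3 s_def by simp
      have eq: "s *\<^sub>R (inverse s *\<^sub>R x1 - z) = x" using s e s_def by (simp add: algebra_simps)
      have nx: "norm x = s * norm (inverse s *\<^sub>R x1 - z)"
        using s eq by (metis norm_scaleR abs_of_pos)
      have "inverse s * r1 - norm (inverse s *\<^sub>R x1 - z) \<le> \<alpha>" using up[OF scl[OF e(3)]] .
      then have "s * (inverse s * r1 - norm (inverse s *\<^sub>R x1 - z)) \<le> s * \<alpha>"
        using s by (simp add: mult_left_mono)
      moreover have "s * (inverse s * r1 - norm (inverse s *\<^sub>R x1 - z)) = r1 - norm x"
        using s by (simp add: nx right_diff_distrib)
      ultimately show ?thesis using e s_def by simp
    qed
  qed
  show ?thesis using inM' sub neq by blast
qed

lemma real_hahn_banach: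
  fixes y :: "'v::real_normed_vector"
  assumes "y \<noteq> 0"
  shows "\<exists>g. (\<forall>x x'. g (x + x') = g x + g x') \<and> (\<forall>a x. g (a *\<^sub>R x) = a * g x) \<and>
             (\<forall>x. \<bar>g x\<bar> \<le> norm x) \<and> g y = norm y"
proof -
  define G0 where "G0 = {(a *\<^sub>R y, a * norm y) | a. True}"
  have G0: "G0 \<in> hbset y" using hb_base[OF assms] G0_def by simp
  have G0sub: "G0 \<subseteq> G" if "G \<in> hbset y" for G
  proof
    fix p assume "p \<in> G0"
    then obtain a where "p = (a *\<^sub>R y, a * norm y)" using G0_def by blast
    then show "p \<in> G" using that unfolding hbset_def by blast
  qed
  have "\<exists>M\<in>hbset y. \<forall>X\<in>hbset y. M \<subseteq> X \<longrightarrow> X = M"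
  proof (rule Zorn_Lemma2, intro ballI)
    fix C assume "C \<in> chains (hbset y)"
    then have C: "C \<subseteq> hbset y" "\<forall>X\<in>C. \<forall>Y\<in>C. X \<subseteq> Y \<or> Y \<subseteq> X"
      unfolding chains_def chain_subset_def by auto
    show "\<exists>U\<in>hbset y. \<forall>X\<in>C. X \<subseteq> U"
    proof (cases "C = {}")
      case True then show ?thesis using G0 by blast
    next
      case False then show ?thesis using hb_chain_union[OF C(1) False C(2)] by blast
    qed
  qed
  then obtain M where M: "M \<in> hbset y" and max: "\<forall>X\<in>hbset y. M \<subseteq> X \<longrightarrow> X = M" by blast
  have tot: "\<exists>r. (x,r) \<in> M" for x :: 'v
    using hb_extend[OF M, of x] max by blast
  have fnc: "\<And>x r s. (x,r)\<in>M \<Longrightarrow> (x,s)\<in>M \<Longrightarrow> r = s"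
    and add: "\<And>x r x' r'. (x,r)\<in>M \<Longrightarrow> (x',r')\<in>M \<Longrightarrow> (x+x', r+r')\<in>M"
    and scl: "\<And>x r a. (x,r)\<in>M \<Longrightarrow> (a *\<^sub>R x, a*r)\<in>M"
    and bnd: "\<And>x r. (x,r)\<in>M \<Longrightarrow> r \<le> norm x"
    and yM: "(y, norm y) \<in> M" using M unfolding hbset_def by blast+
  define g where "g x = (THE r. (x,r) \<in> M)" for x :: 'v
  have gM: "(x, g x) \<in> M" for x :: 'v
    unfolding g_def using tot[of x] fnc by (metis theI)
  have gv: "g x = r" if "(x,r)\<in>M" for x :: 'v and r using fnc[OF gM that] .
  show ?thesis
  proof (intro exI[of _ g] conjI allI)
    fix x x' show "g (x + x') = g x + g x'" using gv[OF add[OF gM gM]] .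
  next
    fix a x show "g (a *\<^sub>R x) = a * g x" using gv[OF scl[OF gM]] .
  next
    fix x
    have "g x \<le> norm x" using bnd[OF gM] .
    moreover have "- g x \<le> norm x" using bnd[OF scl[OF gM[of x], of "-1"]] by simp
    ultimately show "\<bar>g x\<bar> \<le> norm x" by simp
  next
    show "g y = norm y" using gv[OF yM] .
  qed
qed

lemma cvs_decomp:
  assumes "cvs scX"
  shows "scX c x = Re c *\<^sub>R x + Im c *\<^sub>R scX \<i> x"
proof -
  have c: "c = complex_of_real (Re c) + complex_of_real (Im c) * \<i>" by (simp add: complex_eq_iff)
  have "scX c x = scX (complex_of_real (Re c)) x + scX (complex_of_real (Im c) * \<i>) x"
    using assms unfolding cvs_def by (metis c)
  also have "\<dots> = Re c *\<^sub>R x + Im c *\<^sub>R scX \<i> x" using assms unfolding cvs_def by metis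
  finally show ?thesis .
qed

lemma complex_hahn_banach:
  fixes scX :: "complex \<Rightarrow> 'x::real_normed_vector \<Rightarrow> 'x"
  assumes cv: "cvs scX" and y: "y \<noteq> 0"
  shows "\<exists>f. (\<forall>x x'. f (x + x') = f x + f x') \<and> (\<forall>c x. f (scX c x) = c * f x) \<and>
             (\<forall>x. cmod (f x) \<le> norm x) \<and> f y \<noteq> 0"
proof -
  obtain g where gadd: "\<And>x x'. g (x + x') = g x + g x'" and gscl: "\<And>a x. g (a *\<^sub>R x) = a * g x"
    and gb: "\<And>x. \<bar>g x\<bar> \<le> norm x" and gy: "g y = norm y"
    using real_hahn_banach[OF y] by blast
  have ii: "scX \<i> (scX \<i> x) = - x" for x
  proof -
    have "scX \<i> (scX \<i> x) = scX (\<i> * \<i>) x" using cv unfolding cvs_def by metis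
    also have "\<dots> = scX (complex_of_real (-1)) x" by simp
    also have "\<dots> = - x" using cv unfolding cvs_def by (metis scaleR_minus1_left)
    finally show ?thesis .
  qed
  have sadd: "scX c (x + x') = scX c x + scX c x'" for c x x' using cv unfolding cvs_def by blast
  define f where "f x = Complex (g x) (- g (scX \<i> x))" for x
  have fadd: "f (x + x') = f x + f x'" for x x' unfolding f_def by (simp add: gadd sadd complex_eq_iff)
  have gneg: "g (- x) = - g x" for x using gscl[of "-1" x] by simp
  have ssc: "scX c (r *\<^sub>R x) = r *\<^sub>R scX c x" for c r x
  proof -
    have "scX c (r *\<^sub>R x) = scX c (scX (complex_of_real r) x)" using cv unfolding cvs_def by metis
    also have "\<dots> = scX (c * complex_of_real r) x" using cv unfolding cvs_def by metis
    also have "\<dots> = scX (complex_of_real r * c) x" by (simp add: mult.commute)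
    also have "\<dots> = scX (complex_of_real r) (scX c x)" using cv unfolding cvs_def by metis
    also have "\<dots> = r *\<^sub>R scX c x" using cv unfolding cvs_def by metis
    finally show ?thesis .
  qed
  have fscl: "f (scX c x) = c * f x" for c x
  proof -
    have e1: "scX c x = Re c *\<^sub>R x + Im c *\<^sub>R scX \<i> x" by (rule cvs_decomp[OF cv])
    have e2: "scX \<i> (scX c x) = Re c *\<^sub>R scX \<i> x + Im c *\<^sub>R (- x)"
      unfolding e1 sadd ssc ii ..
    have "g (scX c x) = Re c * g x + Im c * g (scX \<i> x)" unfolding e1 gadd gscl ..
    moreover have "g (scX \<i> (scX c x)) = Re c * g (scX \<i> x) - Im c * g x"
      unfolding e2 gadd gscl gneg by simp
    ultimately show ?thesis unfolding f_def
      by (simp add: complex_eq_iff algebra_simps)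
  qed
  have fb: "cmod (f x) \<le> norm x" for x
  proof (cases "f x = 0")
    case True then show ?thesis by simp
  next
    case False
    define \<omega> where "\<omega> = cnj (f x) / complex_of_real (cmod (f x))"
    have "f (scX \<omega> x) = \<omega> * f x" by (rule fscl)
    also have "\<dots> = complex_of_real (cmod (f x))"
    proof -
      have "cnj (f x) * f x = complex_of_real (cmod (f x))^2"
        using complex_norm_square[of "f x"] by (simp add: mult.commute)
      then show ?thesis unfolding \<omega>_def using False
        by (simp add: power2_eq_square)
    qed
    finally have "cmod (f x) = Re (f (scX \<omega> x))" by simp
    also have "\<dots> = g (scX \<omega> x)" unfolding f_def by simp
    also have "\<dots> \<le> norm (scX \<omega> x)" using gb by (metis abs_le_D1)
    also have "\<dots> = cmod \<omega> * norm x" using cv unfolding cvs_def by blast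
    also have "cmod \<omega> = 1" unfolding \<omega>_def using False by (simp add: norm_divide)
    finally show ?thesis by simp
  qed
  have "Re (f y) \<noteq> 0" unfolding f_def using gy y by simp
  then have "f y \<noteq> 0" by auto
  then show ?thesis using fadd fscl fb by blast
qed

lemma cvs_facts:
  assumes "cvs sc"
  shows "sc (complex_of_real r) x = r *\<^sub>R x" "sc c (x + y) = sc c x + sc c y"
    "sc (c + d) x = sc c x + sc d x" "sc (c * d) x = sc c (sc d x)" "norm (sc c x) = cmod c * norm x"
  using assms unfolding cvs_def by blast+

lemma cvs_more:
  assumes cv: "cvs sc"
  shows "sc 1 x = x" "sc 0 x = 0" "sc c 0 = 0" "sc c (- x) = - sc c x" "sc c (x - y) = sc c x - sc c y"
proof -
  show "sc 1 x = x" using cvs_facts(1)[OF cv, of 1 x] by simp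
  show "sc 0 x = 0" using cvs_facts(1)[OF cv, of 0 x] by simp
  have z: "sc c 0 = 0" for c using cvs_facts(5)[OF cv, of c 0] by simp
  then show "sc c 0 = 0" .
  have n: "sc c (- x) = - sc c x" for c x using cvs_facts(2)[OF cv, of c x "-x"] z
    by (simp add: eq_neg_iff_add_eq_0 add.commute)
  then show "sc c (- x) = - sc c x" .
  show "sc c (x - y) = sc c x - sc c y" using cvs_facts(2)[OF cv, of c x "-y"] n by simp
qed

lemma unorm_nonneg: "unorm u \<ge> 0" unfolding unorm_def by simp

lemma abs_unorm[simp]: "\<bar>unorm u\<bar> = unorm u" using unorm_nonneg[of u] by linarith

lemma unorm_umult:
  assumes cv: "cvs sc"
  shows "unorm (umult sc u v) \<le> unorm u * unorm v"
proof -
  have "norm (fst u * fst v + sc (snd u) (fst v) + sc (snd v) (fst u))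
        \<le> norm (fst u) * norm (fst v) + cmod (snd u) * norm (fst v) + cmod (snd v) * norm (fst u)"
    by (rule order_trans[OF norm_triangle_ineq] order_trans[OF add_mono[OF norm_triangle_ineq order_refl]]
         add_mono norm_mult_ineq order_refl | simp add: cvs_facts(5)[OF cv])+
  then show ?thesis unfolding unorm_def umult_def
    by (simp add: norm_mult algebra_simps)
qed

lemma summable_form:
  fixes \<phi> :: "'a::real_normed_algebra \<times> complex \<Rightarrow> 'a \<times> complex \<Rightarrow> complex"
  assumes "ptensor r" and b: "\<forall>u v. cmod (\<phi> u v) \<le> K * (unorm u * unorm v)"
  shows "summable (\<lambda>n. \<phi> (fst (r n)) (snd (r n)))"
  by (rule summable_comparison_test[where g = "\<lambda>n. K * (unorm (fst (r n)) * unorm (snd (r n)))"])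
     (use assms(1) in \<open>auto simp: ptensor_def intro: summable_mult exI[of _ 0] b[rule_format]\<close>)

lemma pair_bound:
  fixes \<phi> :: "'a::real_normed_algebra \<times> complex \<Rightarrow> 'a \<times> complex \<Rightarrow> complex"
  assumes r: "ptensor r" and b: "\<forall>u v. cmod (\<phi> u v) \<le> K * (unorm u * unorm v)"
  shows "cmod (pair \<phi> r) \<le> K * (\<Sum>n. unorm (fst (r n)) * unorm (snd (r n)))"
proof -
  have s: "summable (\<lambda>n. K * (unorm (fst (r n)) * unorm (snd (r n))))"
    using r unfolding ptensor_def by (intro summable_mult)
  have sn: "summable (\<lambda>n. cmod (\<phi> (fst (r n)) (snd (r n))))"
    by (rule summable_comparison_test[OF _ s]) (auto intro: exI[of _ 0] b[rule_format])
  have "cmod (pair \<phi> r) \<le> (\<Sum>n. cmod (\<phi> (fst (r n)) (snd (r n))))"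
    unfolding pair_def by (rule summable_norm[OF sn])
  also have "\<dots> \<le> (\<Sum>n. K * (unorm (fst (r n)) * unorm (snd (r n))))"
    by (rule suminf_le[OF _ sn s]) (rule b[rule_format])
  also have "\<dots> = K * (\<Sum>n. unorm (fst (r n)) * unorm (snd (r n)))"
    using r unfolding ptensor_def by (rule suminf_mult)
  finally show ?thesis .
qed

lemma pair_le_pdist:
  fixes \<phi> :: "'a::real_normed_algebra \<times> complex \<Rightarrow> 'a \<times> complex \<Rightarrow> complex"
  assumes cb: "cbilinear sc \<phi>" and b: "\<forall>u v. cmod (\<phi> u v) \<le> K * (unorm u * unorm v)" and K: "K > 0"
    and r: "ptensor r" and s: "ptensor s"
  shows "cmod (pair \<phi> r - pair \<phi> s) \<le> K * pdist sc r s"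
proof -
  define \<psi> where "\<psi> = (\<lambda>u v. \<phi> u v / complex_of_real K)"
  have "\<psi> \<in> pball sc"
    unfolding pball_def
  proof (rule CollectI, intro conjI allI)
    show "cbilinear sc \<psi>" using cb unfolding cbilinear_def \<psi>_def by (simp add: add_divide_distrib)
    fix u v
    have "cmod (\<psi> u v) = cmod (\<phi> u v) / K" unfolding \<psi>_def using K by (simp add: norm_divide)
    also have "\<dots> \<le> unorm u * unorm v" using b[rule_format, of u v] K by (simp add: divide_le_eq mult.commute)
    finally show "cmod (\<psi> u v) \<le> unorm u * unorm v" .
  qed
  define T where "T r = (\<Sum>n. unorm (fst (r n)) * unorm (snd (r n)))" for r :: "'a tens"
  have bdd: "bdd_above ((\<lambda>\<chi>. cmod (pair \<chi> r - pair \<chi> s)) ` pball sc)"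
  proof (rule bdd_aboveI2)
    fix \<chi> assume "\<chi> \<in> pball sc"
    then have bb: "\<forall>u v. cmod (\<chi> u v) \<le> 1 * (unorm u * unorm v)" unfolding pball_def by simp
    have "cmod (pair \<chi> r - pair \<chi> s) \<le> cmod (pair \<chi> r) + cmod (pair \<chi> s)" by (rule norm_triangle_ineq4)
    also have "\<dots> \<le> 1 * T r + 1 * T s" unfolding T_def
      by (intro add_mono pair_bound[OF r bb] pair_bound[OF s bb])
    finally show "cmod (pair \<chi> r - pair \<chi> s) \<le> T r + T s" by simp
  qed
  have up: "cmod (pair \<psi> r - pair \<psi> s) \<le> pdist sc r s"
    unfolding pdist_def by (rule cSUP_upper[OF \<open>\<psi> \<in> pball sc\<close> bdd])
  have pr: "pair \<psi> r = pair \<phi> r / complex_of_real K"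
    if "ptensor r" for r
    unfolding pair_def \<psi>_def by (rule suminf_divide[OF summable_form[OF that b]])
  have "cmod (pair \<psi> r - pair \<psi> s) = cmod (pair \<phi> r - pair \<phi> s) / K"
    using K by (simp add: pr[OF r] pr[OF s] diff_divide_distrib[symmetric] norm_divide)
  then show ?thesis using up K by (simp add: divide_le_eq mult.commute)
qed

lemma ptensor_flip: "ptensor r \<Longrightarrow> ptensor (flip r)"
  unfolding ptensor_def flip_def by (simp add: mult.commute)

lemma ptensor_lact:
  assumes cv: "cvs sc" and r: "ptensor r"
  shows "ptensor (lact sc u r)"
  unfolding ptensor_def lact_def
proof (rule summable_comparison_test[where g = "\<lambda>n. unorm u * (unorm (fst (r n)) * unorm (snd (r n)))"])
  show "summable (\<lambda>n. unorm u * (unorm (fst (r n)) * unorm (snd (r n))))"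
    using r unfolding ptensor_def by (intro summable_mult)
  have "unorm (umult sc u (fst (r n))) * unorm (snd (r n)) \<le> unorm u * (unorm (fst (r n)) * unorm (snd (r n)))" for n
  proof -
    have "unorm (umult sc u (fst (r n))) * unorm (snd (r n)) \<le> (unorm u * unorm (fst (r n))) * unorm (snd (r n))"
      by (intro mult_right_mono unorm_umult[OF cv] unorm_nonneg)
    then show ?thesis by (simp add: algebra_simps)
  qed
  then show "\<exists>N. \<forall>n\<ge>N. norm (unorm (fst (umult sc u (fst (r n)), snd (r n))) * unorm (snd (umult sc u (fst (r n)), snd (r n))))
     \<le> unorm u * (unorm (fst (r n)) * unorm (snd (r n)))"
    using unorm_nonneg by (auto intro!: exI[of _ 0] simp: abs_mult)
qed

lemma ptensor_ract:
  assumes cv: "cvs sc" and r: "ptensor r"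
  shows "ptensor (ract sc r u)"
  unfolding ptensor_def ract_def
proof (rule summable_comparison_test[where g = "\<lambda>n. unorm u * (unorm (fst (r n)) * unorm (snd (r n)))"])
  show "summable (\<lambda>n. unorm u * (unorm (fst (r n)) * unorm (snd (r n))))"
    using r unfolding ptensor_def by (intro summable_mult)
  have "unorm (fst (r n)) * unorm (umult sc (snd (r n)) u) \<le> unorm u * (unorm (fst (r n)) * unorm (snd (r n)))" for n
  proof -
    have "unorm (fst (r n)) * unorm (umult sc (snd (r n)) u) \<le> unorm (fst (r n)) * (unorm (snd (r n)) * unorm u)"
      by (intro mult_left_mono unorm_umult[OF cv] unorm_nonneg)
    then show ?thesis by (simp add: algebra_simps)
  qed
  then show "\<exists>N. \<forall>n\<ge>N. norm (unorm (fst (fst (r n), umult sc (snd (r n)) u)) * unorm (snd (fst (r n), umult sc (snd (r n)) u)))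
     \<le> unorm u * (unorm (fst (r n)) * unorm (snd (r n)))"
    using unorm_nonneg by (auto intro!: exI[of _ 0] simp: abs_mult)
qed

lemma pair_flip: "pair \<phi> (flip r) = pair (\<lambda>u v. \<phi> v u) r"
  unfolding pair_def flip_def by simp

lemma pair_ppi:
  fixes G :: "'a::{real_normed_algebra,banach} \<Rightarrow> complex"
  assumes cv: "cvs sc" and r: "ptensor r" and G: "bounded_linear G"
  shows "pair (\<lambda>u v. G (fst (umult sc u v)) + snd (umult sc u v) * k) r
         = G (fst (ppi sc r)) + snd (ppi sc r) * k"
proof -
  have cmp: "summable (\<lambda>n. norm (h n))" if "\<And>n. norm (h n) \<le> unorm (umult sc (fst (r n)) (snd (r n)))"
    for h :: "nat \<Rightarrow> 'b::real_normed_vector"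
  proof (rule summable_comparison_test[OF _ r[unfolded ptensor_def]])
    show "\<exists>N. \<forall>n\<ge>N. norm (norm (h n)) \<le> unorm (fst (r n)) * unorm (snd (r n))"
      using order_trans[OF that unorm_umult[OF cv]] by auto
  qed
  have s1: "summable (\<lambda>n. fst (umult sc (fst (r n)) (snd (r n))))"
    by (rule summable_norm_cancel, rule cmp) (simp add: unorm_def)
  have s2: "summable (\<lambda>n. snd (umult sc (fst (r n)) (snd (r n))))"
    by (rule summable_norm_cancel, rule cmp) (simp add: unorm_def)
  have "pair (\<lambda>u v. G (fst (umult sc u v)) + snd (umult sc u v) * k) r
     = (\<Sum>n. G (fst (umult sc (fst (r n)) (snd (r n)))) + snd (umult sc (fst (r n)) (snd (r n))) * k)"
    unfolding pair_def ..
  also have "\<dots> = (\<Sum>n. G (fst (umult sc (fst (r n)) (snd (r n))))) + (\<Sum>n. snd (umult sc (fst (r n)) (snd (r n))) * k)"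
    by (rule suminf_add[symmetric]) (auto intro: summable_mult2 s2 bounded_linear.summable[OF G s1])
  also have "\<dots> = G (fst (ppi sc r)) + snd (ppi sc r) * k"
    unfolding ppi_def by (simp add: bounded_linear.suminf[OF G s1] suminf_mult2[OF s2])
  finally show ?thesis .
qed

lemma umult_unit: "cvs sc \<Longrightarrow> umult sc w (0, 1) = w"
  unfolding umult_def by (simp add: cvs_more)

lemma sad_facts:
  fixes t :: "'i \<Rightarrow> 'a::{real_normed_algebra,banach} tens"
  assumes cv: "cvs sc" and S: "sym_approx_diag sc F t"
  shows "F \<noteq> bot" "eventually (\<lambda>i. ptensor (t i)) F"
    "\<And>\<phi> K. cbilinear sc \<phi> \<Longrightarrow> \<forall>u v. cmod (\<phi> u v) \<le> K * (unorm u * unorm v) \<Longrightarrow> K > 0 \<Longrightarrow>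
       eventually (\<lambda>i. pair \<phi> (flip (t i)) = pair \<phi> (t i)) F"
    "\<And>\<phi> K u. cbilinear sc \<phi> \<Longrightarrow> \<forall>u v. cmod (\<phi> u v) \<le> K * (unorm u * unorm v) \<Longrightarrow> K > 0 \<Longrightarrow>
       ((\<lambda>i. pair \<phi> (lact sc u (t i)) - pair \<phi> (ract sc (t i) u)) \<longlongrightarrow> 0) F"
    "((\<lambda>i. fst (ppi sc (t i))) \<longlongrightarrow> 0) F" "((\<lambda>i. snd (ppi sc (t i))) \<longlongrightarrow> 1) F"
proof -
  have nb: "F \<noteq> bot" and ev: "\<forall>\<^sub>F i in F. ptensor (t i) \<and> pdist sc (flip (t i)) (t i) = 0"
    and lr: "\<And>u. ((\<lambda>i. pdist sc (lact sc u (t i)) (ract sc (t i) u)) \<longlongrightarrow> 0) F"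
    and pp: "\<And>u. ((\<lambda>i. unorm (usub (umult sc (ppi sc (t i)) u) u)) \<longlongrightarrow> 0) F"
    using S unfolding sym_approx_diag_def by blast+
  show "F \<noteq> bot" by (rule nb)
  show evp: "eventually (\<lambda>i. ptensor (t i)) F" using ev by (rule eventually_mono) simp
  show "eventually (\<lambda>i. pair \<phi> (flip (t i)) = pair \<phi> (t i)) F"
    if cb: "cbilinear sc \<phi>" and b: "\<forall>u v. cmod (\<phi> u v) \<le> K * (unorm u * unorm v)" and K: "K > 0" for \<phi> K
    using ev
  proof (rule eventually_mono)
    fix i assume "ptensor (t i) \<and> pdist sc (flip (t i)) (t i) = 0"
    then show "pair \<phi> (flip (t i)) = pair \<phi> (t i)"
      using pair_le_pdist[OF cb b K ptensor_flip, of "t i" "t i"] by simp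
  qed
  show "((\<lambda>i. pair \<phi> (lact sc u (t i)) - pair \<phi> (ract sc (t i) u)) \<longlongrightarrow> 0) F"
    if cb: "cbilinear sc \<phi>" and b: "\<forall>u v. cmod (\<phi> u v) \<le> K * (unorm u * unorm v)" and K: "K > 0" for \<phi> K u
  proof (rule tendsto_0_le[OF lr[of u], where K = K])
    show "\<forall>\<^sub>F i in F. norm (pair \<phi> (lact sc u (t i)) - pair \<phi> (ract sc (t i) u))
                    \<le> norm (pdist sc (lact sc u (t i)) (ract sc (t i) u)) * K"
      using evp
    proof (rule eventually_mono)
      fix i assume "ptensor (t i)"
      then have "cmod (pair \<phi> (lact sc u (t i)) - pair \<phi> (ract sc (t i) u)) \<le> K * pdist sc (lact sc u (t i)) (ract sc (t i) u)"
        by (intro pair_le_pdist[OF cb b K] ptensor_lact[OF cv] ptensor_ract[OF cv])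
      also have "\<dots> \<le> norm (pdist sc (lact sc u (t i)) (ract sc (t i) u)) * K"
        using K by (simp add: mult.commute)
      finally show "norm (pair \<phi> (lact sc u (t i)) - pair \<phi> (ract sc (t i) u))
                    \<le> norm (pdist sc (lact sc u (t i)) (ract sc (t i) u)) * K" by simp
    qed
  qed
  have p1: "((\<lambda>i. unorm (usub (ppi sc (t i)) (0,1))) \<longlongrightarrow> 0) F"
    using pp[of "(0,1)"] by (simp add: umult_unit[OF cv])
  show "((\<lambda>i. fst (ppi sc (t i))) \<longlongrightarrow> 0) F"
    by (rule tendsto_0_le[OF p1, where K = 1]) (simp add: unorm_def usub_def)
  have l1: "((\<lambda>i. snd (ppi sc (t i)) - 1) \<longlongrightarrow> 0) F"
    by (rule tendsto_0_le[OF p1, where K = 1]) (simp add: unorm_def usub_def)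
  then show "((\<lambda>i. snd (ppi sc (t i))) \<longlongrightarrow> 1) F"
    using tendsto_add[OF l1 tendsto_const[of 1]] by simp
qed

lemma double_cancel: "x + x = y + y \<Longrightarrow> x = (y::'x::real_vector)"
  by (metis scaleR_2 scaleR_cancel_left zero_neq_numeral)

locale jds =
  fixes sc :: "complex \<Rightarrow> 'a::{real_normed_algebra,banach} \<Rightarrow> 'a"
    and scX :: "complex \<Rightarrow> 'x::banach \<Rightarrow> 'x"
    and lm :: "'a \<Rightarrow> 'x \<Rightarrow> 'x" and rm :: "'x \<Rightarrow> 'a \<Rightarrow> 'x"
    and d :: "'a \<Rightarrow> 'x"
  assumes ba: "cbanach_algebra sc"
    and bm: "banach_bimodule sc scX lm rm"
    and sy: "symmetric_bimodule lm rm"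
    and cl: "clinear_map sc scX d"
    and bd: "bounded_map d"
    and jd: "jordan_derivation lm rm d"
begin

lemma cvA: "cvs sc" using ba unfolding cbanach_algebra_def by blast
lemma cvX: "cvs scX" using bm unfolding banach_bimodule_def by blast

lemmas scA = cvs_facts[OF cvA] cvs_more[OF cvA]
lemmas scXf = cvs_facts[OF cvX] cvs_more[OF cvX]

lemma sc_ml: "sc c x * y = sc c (x * y)" using ba unfolding cbanach_algebra_def by metis
lemma sc_mr: "x * sc c y = sc c (x * y)" using ba unfolding cbanach_algebra_def by metis

lemma sc_comp: "sc c (sc e x) = sc (c * e) x" using scA(4) by metis
lemma scX_comp: "scX c (scX e x) = scX (c * e) x" using scXf(4) by metis

lemma lm_addl: "lm (a + b) x = lm a x + lm b x" using bm unfolding banach_bimodule_def by simp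
lemma lm_addr: "lm a (x + y) = lm a x + lm a y" using bm unfolding banach_bimodule_def by simp
lemma lm_scl: "lm (sc c a) x = scX c (lm a x)" using bm unfolding banach_bimodule_def by simp
lemma lm_scr: "lm a (scX c x) = scX c (lm a x)" using bm unfolding banach_bimodule_def by simp
lemma lm_mult: "lm (a * b) x = lm a (lm b x)" using bm unfolding banach_bimodule_def by simp
lemma lm_norm: "norm (lm a x) \<le> norm a * norm x" using bm unfolding banach_bimodule_def by simp

lemma rm_lm: "rm x a = lm a x" using sy unfolding symmetric_bimodule_def by metis

lemma lm_comm: "lm a (lm b x) = lm b (lm a x)"
proof -
  have "rm (lm a x) b = lm a (rm x b)" using bm unfolding banach_bimodule_def by blast
  then show ?thesis by (simp add: rm_lm)
qed

lemma lm_zl: "lm 0 x = 0" using lm_addl[of 0 0 x] by simp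
lemma lm_zr: "lm a 0 = 0" using lm_addr[of a 0 0] by simp
lemma lm_negl: "lm (- a) x = - lm a x" using lm_addl[of a "-a" x] lm_zl by (simp add: eq_neg_iff_add_eq_0 add.commute)
lemma lm_negr: "lm a (- x) = - lm a x" using lm_addr[of a x "-x"] lm_zr by (simp add: eq_neg_iff_add_eq_0 add.commute)
lemma lm_diffl: "lm (a - b) x = lm a x - lm b x" using lm_addl[of a "-b" x] lm_negl by simp
lemma lm_diffr: "lm a (x - y) = lm a x - lm a y" using lm_addr[of a x "-y"] lm_negr by simp

lemmas lm_simps = lm_addl lm_addr lm_scl lm_scr lm_mult lm_zl lm_zr lm_negl lm_negr lm_diffl lm_diffr

lemma d_add: "d (a + b) = d a + d b" using cl unfolding clinear_map_def by blast
lemma d_sc: "d (sc c a) = scX c (d a)" using cl unfolding clinear_map_def by blast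
lemma d_0: "d 0 = 0" using d_add[of 0 0] by simp
lemma d_neg: "d (- a) = - d a" using d_add[of a "-a"] d_0 by (simp add: eq_neg_iff_add_eq_0 add.commute)
lemma d_diff: "d (a - b) = d a - d b" using d_add[of a "-b"] d_neg by simp

lemmas d_simps = d_add d_sc d_0 d_neg d_diff

lemma jord: "d (a * b + b * a) = lm a (d b) + lm a (d b) + lm b (d a) + lm b (d a)"
  using jd unfolding jordan_derivation_def by (simp add: rm_lm algebra_simps)

lemma triple: "d (q * c * p + p * c * q) = lm (p * q + q * p) (d c) + lm c (d (p * q + q * p))"
proof -
  define J where "J u v = u * v + v * u" for u v :: 'a
  have dJ: "d (J u v) = lm u (d v) + lm u (d v) + lm v (d u) + lm v (d u)" for u v
    unfolding J_def by (rule jord)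
  have lJ: "lm (J u v) x = lm u (lm v x) + lm u (lm v x)" for u v x
    unfolding J_def by (simp add: lm_simps lm_comm)
  have e: "(q * c * p + p * c * q) + (q * c * p + p * c * q) = J (J q c) p + J (J p c) q - J (J q p) c"
    unfolding J_def by (simp add: algebra_simps)
  have "d (q * c * p + p * c * q) + d (q * c * p + p * c * q)
      = d (J (J q c) p) + d (J (J p c) q) - d (J (J q p) c)"
    by (metis e d_add d_diff)
  also have "\<dots> = (lm (p * q + q * p) (d c) + lm c (d (p * q + q * p))) +
                   (lm (p * q + q * p) (d c) + lm c (d (p * q + q * p)))"
    unfolding dJ lJ using jord[of p q] unfolding J_def[symmetric]
    by (simp add: lm_simps lm_comm dJ lJ algebra_simps)
  finally show ?thesis by (rule double_cancel)
qed


lemma sc_sw: "sc a (sc b x) = sc b (sc a x)" by (metis sc_comp mult.commute)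
lemma scX_sw: "scX a (scX b x) = scX b (scX a x)" by (metis scX_comp mult.commute)

lemma scX2: "scX 2 x = x + x"
  using scXf(1)[of 2 x] by (simp add: scaleR_2)

lemmas U_simps = scX2 umult_def uadd_def uscale_def scA(2-4) scA(6-10) scXf(2-4) scXf(6-10) sc_ml sc_mr
  d_simps lm_simps sc_sw scX_sw

lemma pw1:
  "d (fst (umult sc (umult sc v (c,0)) u)) + d (fst (umult sc (umult sc u (c,0)) v))
   = lm (fst (uadd (umult sc u v) (umult sc v u))) (d c) + scX (snd (uadd (umult sc u v) (umult sc v u))) (d c)
     + lm c (d (fst (uadd (umult sc u v) (umult sc v u))))"
proof -
  obtain p l where u: "u = (p, l)" by (cases u)
  obtain q m where v: "v = (q, m)" by (cases v)
  have T: "d (p * (c * q)) = (lm (p * q + q * p) (d c) + lm c (d (p * q + q * p))) - d (q * (c * p))"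
  proof -
    have "d (q * (c * p)) + d (p * (c * q)) = lm (p * q + q * p) (d c) + lm c (d (p * q + q * p))"
      using triple[of q c p] by (simp add: d_add mult.assoc)
    then show ?thesis by (metis add_diff_cancel_left')
  qed
  have J1: "d (p * c) = (lm c (d p) + lm c (d p) + lm p (d c) + lm p (d c)) - d (c * p)"
    using jord[of c p] by (metis d_add add_diff_cancel_left')
  have J2: "d (q * c) = (lm c (d q) + lm c (d q) + lm q (d c) + lm q (d c)) - d (c * q)"
    using jord[of c q] by (metis d_add add_diff_cancel_left')
  show ?thesis unfolding u v
    by (simp add: U_simps T J1 J2 algebra_simps)
qed


lemma pw2:
  "d (fst (umult sc (umult sc v (b,0)) (umult sc (a,0) u))) - d (fst (umult sc (umult sc (umult sc v (a,0)) (b,0)) u))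
   = - d (fst (umult sc (umult sc v (a * b - b * a, 0)) u))"
proof -
  obtain p l where u: "u = (p, l)" by (cases u)
  obtain q m where v: "v = (q, m)" by (cases v)
  show ?thesis unfolding u v by (simp add: U_simps algebra_simps)
qed

lemma umult_uadd_l: "umult sc (uadd u v) w = uadd (umult sc u w) (umult sc v w)"
  and umult_uadd_r: "umult sc w (uadd u v) = uadd (umult sc w u) (umult sc w v)"
  and umult_uscale_l: "umult sc (uscale sc c u) v = uscale sc c (umult sc u v)"
  and umult_uscale_r: "umult sc u (uscale sc c v) = uscale sc c (umult sc u v)"
  by (simp_all add: U_simps algebra_simps)

lemma cbil_of:
  assumes La: "\<And>u v. L (uadd u v) = L u + L v" and Ls: "\<And>c u. L (uscale sc c u) = c * L u"
  shows "cbilinear sc (\<lambda>u v. L (umult sc u v))"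
    "cbilinear sc (\<lambda>u v. L (umult sc (umult sc u C) v))"
    "cbilinear sc (\<lambda>u v. L (umult sc (umult sc v C) u))"
  unfolding cbilinear_def
  by (simp_all add: umult_uadd_l umult_uadd_r umult_uscale_l umult_uscale_r La Ls)

lemma bnd_of:
  assumes Lb: "\<And>w. cmod (L w) \<le> B * unorm w" and B: "B \<ge> 0"
  shows "\<forall>u v. cmod (L (umult sc u v)) \<le> (B + 1) * (unorm u * unorm v)"
    "\<forall>u v. cmod (L (umult sc (umult sc u C) v)) \<le> (B * unorm C + 1) * (unorm u * unorm v)"
    "\<forall>u v. cmod (L (umult sc (umult sc v C) u)) \<le> (B * unorm C + 1) * (unorm u * unorm v)"
proof (intro allI)
  have um: "unorm (umult sc u v) \<le> unorm u * unorm v" for u v by (rule unorm_umult[OF cvA])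
  have nn: "0 \<le> unorm u * unorm v" for u v by (simp add: unorm_nonneg)
  fix u v
  have "cmod (L (umult sc u v)) \<le> B * (unorm u * unorm v)"
    using Lb[of "umult sc u v"] mult_left_mono[OF um[of u v] B] by linarith
  also have "\<dots> \<le> (B + 1) * (unorm u * unorm v)" using nn[of u v] by (simp add: distrib_right)
  finally show "cmod (L (umult sc u v)) \<le> (B + 1) * (unorm u * unorm v)" .
next
  have um: "unorm (umult sc u v) \<le> unorm u * unorm v" for u v by (rule unorm_umult[OF cvA])
  have nn: "0 \<le> unorm u * unorm v" for u v by (simp add: unorm_nonneg)
  have um3: "unorm (umult sc (umult sc u C) v) \<le> unorm C * (unorm u * unorm v)" for u v
  proof -
    have "unorm (umult sc (umult sc u C) v) \<le> unorm (umult sc u C) * unorm v" by (rule um)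
    also have "\<dots> \<le> (unorm u * unorm C) * unorm v" by (intro mult_right_mono um unorm_nonneg)
    finally show ?thesis by (simp add: algebra_simps)
  qed
  have gen: "cmod (L (umult sc (umult sc u C) v)) \<le> (B * unorm C + 1) * (unorm u * unorm v)" for u v
  proof -
    have "cmod (L (umult sc (umult sc u C) v)) \<le> B * (unorm C * (unorm u * unorm v))"
      using Lb[of "umult sc (umult sc u C) v"] mult_left_mono[OF um3[of u v] B] by linarith
    also have "\<dots> \<le> (B * unorm C + 1) * (unorm u * unorm v)" using nn[of u v] by (simp add: algebra_simps)
    finally show ?thesis .
  qed
  show "\<forall>u v. cmod (L (umult sc (umult sc u C) v)) \<le> (B * unorm C + 1) * (unorm u * unorm v)"
    using gen by blast
  show "\<forall>u v. cmod (L (umult sc (umult sc v C) u)) \<le> (B * unorm C + 1) * (unorm u * unorm v)"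
  proof (intro allI)
    fix u v show "cmod (L (umult sc (umult sc v C) u)) \<le> (B * unorm C + 1) * (unorm u * unorm v)"
      using gen[of v u] by (simp add: mult.commute)
  qed
qed

end

context jds begin

lemma comm_zero:
  assumes spa: "sym_pseudo_amenable_unitization sc"
  shows "d (a * b - b * a) = 0"
proof (rule ccontr)
  define c where "c = a * b - b * a"
  define y where "y = d c"
  assume "d (a * b - b * a) \<noteq> 0"
  then have y0: "y \<noteq> 0" by (simp add: y_def c_def)
  obtain f where fadd: "\<And>x x'. f (x + x') = f x + f x'" and fscl: "\<And>k x. f (scX k x) = k * f x"
    and fb: "\<And>x. cmod (f x) \<le> norm x" and fy: "f y \<noteq> 0"
    using complex_hahn_banach[OF cvX y0] by blast
  have f0: "f 0 = 0" using fadd[of 0 0] by simp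
  have fneg: "f (- x) = - f x" for x using fadd[of x "-x"] f0 by (simp add: eq_neg_iff_add_eq_0 add.commute)
  have fdiff: "f (x - x') = f x - f x'" for x x' using fadd[of x "-x'"] fneg by simp
  obtain K0 where K0: "\<And>a. norm (d a) \<le> K0 * norm a" using bd unfolding bounded_map_def by blast
  define Kd where "Kd = max K0 0"
  have Kd0: "Kd \<ge> 0" by (simp add: Kd_def)
  have Kd: "norm (d x) \<le> Kd * norm x" for x
  proof -
    have "K0 * norm x \<le> Kd * norm x" unfolding Kd_def by (intro mult_right_mono) auto
    then show ?thesis using K0[of x] by linarith
  qed
  obtain F and t :: "'a tens \<Rightarrow> 'a tens" where S: "sym_approx_diag sc F t"
    using spa unfolding sym_pseudo_amenable_unitization_def by blast
  note SF = sad_facts[OF cvA S]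
  define L1 where "L1 w = f (d (fst w))" for w :: "'a \<times> complex"
  have L1a: "L1 (uadd u v) = L1 u + L1 v" for u v unfolding L1_def uadd_def by (simp add: d_add fadd)
  have L1s: "L1 (uscale sc k u) = k * L1 u" for k u unfolding L1_def uscale_def by (simp add: d_sc fscl)
  have L1b: "cmod (L1 w) \<le> Kd * unorm w" for w
  proof -
    have "cmod (L1 w) \<le> norm (d (fst w))" unfolding L1_def by (rule fb)
    also have "\<dots> \<le> Kd * norm (fst w)" by (rule Kd)
    also have "\<dots> \<le> Kd * unorm w" unfolding unorm_def by (intro mult_left_mono Kd0) simp
    finally show ?thesis .
  qed
  define G where "G x = f (lm x y) + f (lm c (d x))" for x
  have Ga: "G (x + x') = G x + G x'" for x x' unfolding G_def by (simp add: lm_simps d_simps fadd)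
  have Gsc: "G (sc k x) = k * G x" for k x unfolding G_def by (simp add: lm_simps d_simps fscl algebra_simps)
  have Gs: "G (r *\<^sub>R x) = r *\<^sub>R G x" for r x
    using Gsc[of "complex_of_real r" x] scA(1)[of r x] by (simp add: scaleR_conv_of_real)
  define KG where "KG = norm y + norm c * Kd"
  have KG0: "KG \<ge> 0" unfolding KG_def using Kd0 by simp
  have Gb: "norm (G x) \<le> norm x * KG" for x
  proof -
    have "norm (G x) \<le> cmod (f (lm x y)) + cmod (f (lm c (d x)))" unfolding G_def by (rule norm_triangle_ineq)
    also have "\<dots> \<le> norm (lm x y) + norm (lm c (d x))" by (intro add_mono fb)
    also have "\<dots> \<le> norm x * norm y + norm c * norm (d x)" by (intro add_mono lm_norm)
    also have "\<dots> \<le> norm x * norm y + norm c * (Kd * norm x)" by (intro add_mono order_refl mult_left_mono Kd) simp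
    finally show ?thesis unfolding KG_def by (simp add: algebra_simps)
  qed
  have Gbl: "bounded_linear G" by (rule bounded_linear_intro[OF Ga Gs Gb])
  define Kf where "Kf w = G (fst w) + snd w * f y" for w
  have Kfa: "Kf (uadd u v) = Kf u + Kf v" for u v unfolding Kf_def uadd_def by (simp add: Ga algebra_simps)
  have Kfs: "Kf (uscale sc k u) = k * Kf u" for k u unfolding Kf_def uscale_def by (simp add: Gsc algebra_simps)
  have Kfb: "cmod (Kf w) \<le> KG * unorm w" for w
  proof -
    have "cmod (Kf w) \<le> cmod (G (fst w)) + cmod (snd w) * cmod (f y)" unfolding Kf_def
      by (metis norm_triangle_ineq norm_mult)
    also have "\<dots> \<le> norm (fst w) * KG + cmod (snd w) * KG"
    proof (intro add_mono Gb mult_left_mono)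
      show "cmod (f y) \<le> KG" using fb[of y] Kd0 unfolding KG_def by (smt (verit) mult_nonneg_nonneg norm_ge_zero)
    qed simp
    finally show ?thesis unfolding unorm_def by (simp add: algebra_simps)
  qed
  define \<phi>1 where "\<phi>1 = (\<lambda>u v. L1 (umult sc (umult sc u (c,0)) v))"
  define \<psi> where "\<psi> = (\<lambda>u v. L1 (umult sc (umult sc v (b,0)) u))"
  define \<kappa> where "\<kappa> = (\<lambda>u v. Kf (umult sc u v))"
  have cb1: "cbilinear sc \<phi>1" unfolding \<phi>1_def by (rule cbil_of(2)[OF L1a L1s])
  have bd1: "\<forall>u v. cmod (\<phi>1 u v) \<le> (Kd * unorm (c,0) + 1) * (unorm u * unorm v)"
    unfolding \<phi>1_def by (rule bnd_of(2)[OF L1b Kd0])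
  have cb2: "cbilinear sc \<psi>" unfolding \<psi>_def by (rule cbil_of(3)[OF L1a L1s])
  have bd2: "\<forall>u v. cmod (\<psi> u v) \<le> (Kd * unorm (b,0) + 1) * (unorm u * unorm v)"
    unfolding \<psi>_def by (rule bnd_of(3)[OF L1b Kd0])
  have cb3: "cbilinear sc \<kappa>" unfolding \<kappa>_def by (rule cbil_of(1)[OF Kfa Kfs])
  have bd3: "\<forall>u v. cmod (\<kappa> u v) \<le> (KG + 1) * (unorm u * unorm v)"
    unfolding \<kappa>_def by (rule bnd_of(1)[OF Kfb KG0])
  have pos1: "Kd * unorm (c,0) + 1 > 0" using mult_nonneg_nonneg[OF Kd0 unorm_nonneg[of "(c,0)"]] by linarith
  have pos2: "Kd * unorm (b,0) + 1 > 0" using mult_nonneg_nonneg[OF Kd0 unorm_nonneg[of "(b,0)"]] by linarith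
  have pos3: "KG + 1 > 0" using KG0 by linarith
  have E1: "eventually (\<lambda>i. pair \<phi>1 (flip (t i)) = pair \<phi>1 (t i)) F" by (rule SF(3)[OF cb1 bd1 pos1])
  have E2: "eventually (\<lambda>i. pair \<kappa> (flip (t i)) = pair \<kappa> (t i)) F" by (rule SF(3)[OF cb3 bd3 pos3])
  have T1: "((\<lambda>i. pair \<psi> (lact sc (a,0) (t i)) - pair \<psi> (ract sc (t i) (a,0))) \<longlongrightarrow> 0) F"
    by (rule SF(4)[OF cb2 bd2 pos2])
  have pwf: "\<phi>1 v u + \<phi>1 u v = \<kappa> u v + \<kappa> v u" for u v
  proof -
    define W where "W = uadd (umult sc u v) (umult sc v u)"
    have "\<phi>1 v u + \<phi>1 u v = f (lm (fst W) y + scX (snd W) y + lm c (d (fst W)))"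
      unfolding \<phi>1_def L1_def W_def y_def fadd[symmetric] by (rule arg_cong[where f = f], rule pw1)
    also have "\<dots> = Kf W" unfolding Kf_def G_def by (simp add: fadd fscl algebra_simps)
    also have "\<dots> = \<kappa> u v + \<kappa> v u" unfolding W_def \<kappa>_def by (rule Kfa)
    finally show ?thesis .
  qed
  have pwd: "\<psi> (umult sc (a,0) u) v - \<psi> u (umult sc v (a,0)) = - \<phi>1 v u" for u v
    unfolding \<psi>_def \<phi>1_def L1_def c_def fdiff[symmetric] fneg[symmetric] by (rule arg_cong[where f = f], rule pw2)
  have sm: "summable (\<lambda>n. \<chi> (fst (r n)) (snd (r n)))"
    if "ptensor r" "\<forall>u v. cmod (\<chi> u v) \<le> K * (unorm u * unorm v)" for r \<chi> K
    using summable_form[OF that] .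
  have P1: "pair \<psi> (lact sc (a,0) r) - pair \<psi> (ract sc r (a,0)) = - pair \<phi>1 (flip r)" if r: "ptensor r" for r
  proof -
    have a1: "summable (\<lambda>n. \<phi>1 (snd (r n)) (fst (r n)))"
      using sm[OF ptensor_flip[OF r] bd1] unfolding flip_def by simp
    have s1: "summable (\<lambda>n. \<psi> (umult sc (a,0) (fst (r n))) (snd (r n)))"
      using sm[OF ptensor_lact[OF cvA r] bd2] unfolding lact_def by simp
    have s2: "summable (\<lambda>n. \<psi> (fst (r n)) (umult sc (snd (r n)) (a,0)))"
      using sm[OF ptensor_ract[OF cvA r] bd2] unfolding ract_def by simp
    have "pair \<psi> (lact sc (a,0) r) - pair \<psi> (ract sc r (a,0))
        = (\<Sum>n. \<psi> (umult sc (a,0) (fst (r n))) (snd (r n)) - \<psi> (fst (r n)) (umult sc (snd (r n)) (a,0)))"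
      unfolding pair_def lact_def ract_def by (simp add: suminf_diff[OF s1 s2])
    also have "\<dots> = (\<Sum>n. - \<phi>1 (snd (r n)) (fst (r n)))" by (simp add: pwd)
    also have "\<dots> = - pair \<phi>1 (flip r)" unfolding pair_def flip_def by (simp add: suminf_minus[OF a1])
    finally show ?thesis .
  qed
  have P2: "pair \<phi>1 (flip r) + pair \<phi>1 r = pair \<kappa> r + pair \<kappa> (flip r)" if r: "ptensor r" for r
  proof -
    have a1: "summable (\<lambda>n. \<phi>1 (snd (r n)) (fst (r n)))"
      using sm[OF ptensor_flip[OF r] bd1] unfolding flip_def by simp
    have a2: "summable (\<lambda>n. \<phi>1 (fst (r n)) (snd (r n)))" using sm[OF r bd1] .
    have a3: "summable (\<lambda>n. \<kappa> (snd (r n)) (fst (r n)))"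
      using sm[OF ptensor_flip[OF r] bd3] unfolding flip_def by simp
    have a4: "summable (\<lambda>n. \<kappa> (fst (r n)) (snd (r n)))" using sm[OF r bd3] .
    have "pair \<phi>1 (flip r) + pair \<phi>1 r = (\<Sum>n. \<phi>1 (snd (r n)) (fst (r n)) + \<phi>1 (fst (r n)) (snd (r n)))"
      unfolding pair_def flip_def by (simp add: suminf_add[OF a1 a2])
    also have "\<dots> = (\<Sum>n. \<kappa> (fst (r n)) (snd (r n)) + \<kappa> (snd (r n)) (fst (r n)))" by (simp add: pwf)
    also have "\<dots> = pair \<kappa> r + pair \<kappa> (flip r)"
      unfolding pair_def flip_def by (simp add: suminf_add[OF a4 a3])
    finally show ?thesis .
  qed
  have P3: "pair \<kappa> r = Kf (ppi sc r)" if r: "ptensor r" for r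
    unfolding \<kappa>_def Kf_def by (rule pair_ppi[OF cvA r Gbl])
  have T2: "((\<lambda>i. Kf (ppi sc (t i))) \<longlongrightarrow> f y) F"
  proof -
    have "((\<lambda>i. G (fst (ppi sc (t i))) + snd (ppi sc (t i)) * f y) \<longlongrightarrow> G 0 + 1 * f y) F"
      by (intro tendsto_add bounded_linear.tendsto[OF Gbl] SF(5) tendsto_mult SF(6) tendsto_const)
    moreover have "G 0 = 0" using Ga[of 0 0] by simp
    ultimately show ?thesis unfolding Kf_def by simp
  qed
  have ev1: "eventually (\<lambda>i. pair \<phi>1 (t i) = Kf (ppi sc (t i))) F"
    using SF(2) E1 E2
  proof (eventually_elim)
    case (elim i)
    then have "pair \<phi>1 (t i) + pair \<phi>1 (t i) = pair \<kappa> (t i) + pair \<kappa> (t i)"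
      using P2[of "t i"] by simp
    then have "pair \<phi>1 (t i) = pair \<kappa> (t i)" by (rule double_cancel)
    then show ?case using P3[OF elim(1)] by simp
  qed
  have ev2: "eventually (\<lambda>i. pair \<phi>1 (t i) = - (pair \<psi> (lact sc (a,0) (t i)) - pair \<psi> (ract sc (t i) (a,0)))) F"
    using SF(2) E1
  proof (eventually_elim)
    case (elim i)
    then show ?case using P1[OF elim(1)] by simp
  qed
  have L0: "((\<lambda>i. pair \<phi>1 (t i)) \<longlongrightarrow> 0) F"
    using tendsto_minus[OF T1] tendsto_cong[OF ev2] by simp
  have Lf: "((\<lambda>i. pair \<phi>1 (t i)) \<longlongrightarrow> f y) F"
    using T2 tendsto_cong[OF ev1] by simp
  have "f y = 0" using tendsto_unique[OF SF(1) Lf L0] .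
  then show False using fy by simp
qed

end

theorem corollary5p4:
  fixes sc :: "complex \<Rightarrow> 'a::{real_normed_algebra,banach} \<Rightarrow> 'a"
    and scX :: "complex \<Rightarrow> 'x::banach \<Rightarrow> 'x"
    and lm :: "'a \<Rightarrow> 'x \<Rightarrow> 'x" and rm :: "'x \<Rightarrow> 'a \<Rightarrow> 'x"
    and d :: "'a \<Rightarrow> 'x"
  assumes "cbanach_algebra sc"
    and "sym_pseudo_amenable_unitization sc"
    and "banach_bimodule sc scX lm rm"
    and "symmetric_bimodule lm rm"
    and "clinear_map sc scX d"
    and "bounded_map d"
    and "jordan_derivation lm rm d"
  shows "derivation lm rm d"
proof -
  interpret jds sc scX lm rm d
    using assms by (simp add: jds_def)
  show ?thesis unfolding derivation_def
  proof (intro allI)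
    fix a b :: 'a
    have e: "d (a * b) = d (b * a)" using comm_zero[OF assms(2), of a b] by (simp add: d_diff)
    have "d (a * b) + d (a * b) = lm a (d b) + lm a (d b) + lm b (d a) + lm b (d a)"
      using jord[of a b] by (simp add: d_add e)
    then have "d (a * b) + d (a * b) = (rm (d a) b + lm a (d b)) + (rm (d a) b + lm a (d b))"
      by (simp add: rm_lm algebra_simps)
    then show "d (a * b) = rm (d a) b + lm a (d b)" by (rule double_cancel)
  qed
qed

end
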